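(* Let $A$ be an order-unit space with order unit $1$, and let $L$ be a seminorm on $A$ (taking finite values) such that $L(1)=0$. Set $\mathcal B_1=\{a\in A: L(a)\le 1\}$, and let $\tilde A=A/\mathbb R 1$ with its quotient norm $\|\cdot\|^{\sim}$. Then: (a) $\rho_L$ gives $S(A)$ finite diameter if and only if the image of $\mathcal B_1$ in $\tilde A$ is bounded for $\|\cdot\|^{\sim}$; (b) the topology on $S(A)$ determined by $\rho_L$ coincides with the weak-$*$ topology if and only if the image of $\mathcal B_1$ in $\tilde A$ is totally bounded for $\|\cdot\|^{\sim}$.
   Context: An order-unit space may be taken concretely as a real linear space of self-adjoint bounded operators on a Hilbert space containing the identity operator $1$ (the order unit), with the usual operator ordering and operator norm (it need not be complete). Its state space $S(A)$ is the set of positive linear functionals $\mu$ on $A$ with $\mu(1)=1$, with the weak-$*$ topology. For a seminorm $L$ on $A$, the (possibly $+\infty$-valued) metric $\rho_L$ on $S(A)$ is $\rho_L(\mu,\nu)=\sup\{|\mu(a)-\nu(a)|: a\in A,\ L(a)\le 1\}$. *)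

theory Defs
  imports "HOL-Analysis.Analysis"
begin

text \<open>Concrete order-unit spaces: real linear spaces of bounded self-adjoint operators on a
(real) Hilbert space containing the identity operator, with operator ordering and operator norm.\<close>

definition self_adjoint :: "('h::real_inner \<Rightarrow>\<^sub>L 'h) \<Rightarrow> bool" where
  "self_adjoint T \<longleftrightarrow> (\<forall>x y. inner (blinfun_apply T x) y = inner x (blinfun_apply T y))"

definition op_le :: "('h::real_inner \<Rightarrow>\<^sub>L 'h) \<Rightarrow> ('h \<Rightarrow>\<^sub>L 'h) \<Rightarrow> bool" where
  "op_le T S \<longleftrightarrow> (\<forall>x. inner (blinfun_apply T x) x \<le> inner (blinfun_apply S x) x)"

definition order_unit_space :: "('h::{real_inner,complete_space} \<Rightarrow>\<^sub>L 'h) set \<Rightarrow> bool" where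
  "order_unit_space A \<longleftrightarrow> subspace A \<and> (\<forall>T\<in>A. self_adjoint T) \<and> id_blinfun \<in> A"

text \<open>State space: positive linear functionals on A taking value 1 at the order unit.
  Functionals are represented as functions on the whole operator type that vanish outside A.\<close>
definition state_space :: "('h::{real_inner,complete_space} \<Rightarrow>\<^sub>L 'h) set \<Rightarrow> (('h \<Rightarrow>\<^sub>L 'h) \<Rightarrow> real) set" where
  "state_space A = {\<mu>. (\<forall>a\<in>A. \<forall>b\<in>A. \<mu> (a + b) = \<mu> a + \<mu> b)
                       \<and> (\<forall>t. \<forall>a\<in>A. \<mu> (t *\<^sub>R a) = t * \<mu> a)
                       \<and> (\<forall>a\<in>A. op_le 0 a \<longrightarrow> 0 \<le> \<mu> a)
                       \<and> \<mu> id_blinfun = 1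
                       \<and> (\<forall>a. a \<notin> A \<longrightarrow> \<mu> a = 0)}"

definition weak_star_topology :: "('h::{real_inner,complete_space} \<Rightarrow>\<^sub>L 'h) set \<Rightarrow> (('h \<Rightarrow>\<^sub>L 'h) \<Rightarrow> real) topology" where
  "weak_star_topology A =
     topology_generated_by {{\<mu> \<in> state_space A. \<mu> a \<in> U} | a U. a \<in> A \<and> open U}"

definition seminorm_on :: "('h::{real_inner,complete_space} \<Rightarrow>\<^sub>L 'h) set \<Rightarrow> (('h \<Rightarrow>\<^sub>L 'h) \<Rightarrow> real) \<Rightarrow> bool" where
  "seminorm_on A L \<longleftrightarrow> (\<forall>a\<in>A. \<forall>b\<in>A. L (a + b) \<le> L a + L b) \<and> (\<forall>t. \<forall>a\<in>A. L (t *\<^sub>R a) = \<bar>t\<bar> * L a)"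

definition lip_ball :: "('h::{real_inner,complete_space} \<Rightarrow>\<^sub>L 'h) set \<Rightarrow> (('h \<Rightarrow>\<^sub>L 'h) \<Rightarrow> real) \<Rightarrow> ('h \<Rightarrow>\<^sub>L 'h) set" where
  "lip_ball A L = {a \<in> A. L a \<le> 1}"

definition rho_L :: "('h::{real_inner,complete_space} \<Rightarrow>\<^sub>L 'h) set \<Rightarrow> (('h \<Rightarrow>\<^sub>L 'h) \<Rightarrow> real)
                     \<Rightarrow> (('h \<Rightarrow>\<^sub>L 'h) \<Rightarrow> real) \<Rightarrow> (('h \<Rightarrow>\<^sub>L 'h) \<Rightarrow> real) \<Rightarrow> ereal" where
  "rho_L A L \<mu> \<nu> = (SUP a \<in> lip_ball A L. ereal \<bar>\<mu> a - \<nu> a\<bar>)"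

definition rho_topology :: "('h::{real_inner,complete_space} \<Rightarrow>\<^sub>L 'h) set \<Rightarrow> (('h \<Rightarrow>\<^sub>L 'h) \<Rightarrow> real)
                            \<Rightarrow> (('h \<Rightarrow>\<^sub>L 'h) \<Rightarrow> real) topology" where
  "rho_topology A L =
     topology_generated_by {{\<nu> \<in> state_space A. rho_L A L \<mu> \<nu> < ereal r} | \<mu> r. \<mu> \<in> state_space A \<and> r > 0}"

definition quot_norm :: "('h::{real_inner,complete_space} \<Rightarrow>\<^sub>L 'h) \<Rightarrow> real" where
  "quot_norm a = (INF t::real. norm (a - t *\<^sub>R id_blinfun))"

definition quot_totally_bounded :: "('h::{real_inner,complete_space} \<Rightarrow>\<^sub>L 'h) set \<Rightarrow> bool" where
  "quot_totally_bounded B \<longleftrightarrow>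
     (\<forall>e>0. \<exists>F. finite F \<and> F \<subseteq> B \<and> (\<forall>a\<in>B. \<exists>f\<in>F. quot_norm (a - f) < e))"

end

theory Submission
  imports Defs
begin

lemma ous_facts:
  assumes "order_unit_space A"
  shows "subspace A" "id_blinfun \<in> A" "0 \<in> A"
    "\<And>a b. a \<in> A \<Longrightarrow> b \<in> A \<Longrightarrow> a + b \<in> A"
    "\<And>a b. a \<in> A \<Longrightarrow> b \<in> A \<Longrightarrow> a - b \<in> A"
    "\<And>a t. a \<in> A \<Longrightarrow> t *\<^sub>R a \<in> A"
    "\<And>a. a \<in> A \<Longrightarrow> self_adjoint a"
proof -
  have s: "subspace A" and i: "id_blinfun \<in> A" and sa: "\<forall>T\<in>A. self_adjoint T"
    using assms unfolding order_unit_space_def by blast+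
  show "subspace A" "id_blinfun \<in> A" by (fact s, fact i)
  show "0 \<in> A" using s by (rule subspace_0)
  show "\<And>a b. a \<in> A \<Longrightarrow> b \<in> A \<Longrightarrow> a + b \<in> A" using s by (rule subspace_add)
  show "\<And>a b. a \<in> A \<Longrightarrow> b \<in> A \<Longrightarrow> a - b \<in> A" using s by (rule subspace_diff)
  show "\<And>a t. a \<in> A \<Longrightarrow> t *\<^sub>R a \<in> A" using s by (rule subspace_scale)
  show "\<And>a. a \<in> A \<Longrightarrow> self_adjoint a" using sa by blast
qed


lemma state_facts:
  assumes "order_unit_space A" "\<mu> \<in> state_space A"
  shows "\<And>a b. a \<in> A \<Longrightarrow> b \<in> A \<Longrightarrow> \<mu> (a + b) = \<mu> a + \<mu> b"
    "\<And>a t. a \<in> A \<Longrightarrow> \<mu> (t *\<^sub>R a) = t * \<mu> a"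
    "\<mu> id_blinfun = 1"
    "\<And>a. a \<in> A \<Longrightarrow> op_le 0 a \<Longrightarrow> 0 \<le> \<mu> a"
    "\<And>a. a \<notin> A \<Longrightarrow> \<mu> a = 0"
  using assms(2) unfolding state_space_def by blast+

lemma state_diff:
  assumes "order_unit_space A" "\<mu> \<in> state_space A" "a \<in> A" "b \<in> A"
  shows "\<mu> (a - b) = \<mu> a - \<mu> b"
proof -
  have e: "a - b = a + (-1) *\<^sub>R b" by simp
  have m: "(-1) *\<^sub>R b \<in> A" using ous_facts(6)[OF assms(1) assms(4)] .
  have "\<mu> (a - b) = \<mu> (a + (-1) *\<^sub>R b)" by (rule arg_cong[OF e])
  also have "\<dots> = \<mu> a + \<mu> ((-1) *\<^sub>R b)" using state_facts(1)[OF assms(1,2) assms(3) m] .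
  also have "\<mu> ((-1) *\<^sub>R b) = - \<mu> b" using state_facts(2)[OF assms(1,2) assms(4), of "-1"] by simp
  finally show ?thesis by linarith
qed

lemma state_sub_const:
  assumes "order_unit_space A" "\<mu> \<in> state_space A" "a \<in> A"
  shows "\<mu> (a - c *\<^sub>R id_blinfun) = \<mu> a - c"
  using state_diff[OF assms(1,2,3) ous_facts(6)[OF assms(1) ous_facts(2)[OF assms(1)]]]
    state_facts[OF assms(1,2)] ous_facts[OF assms(1)] by simp

lemma state_bound:
  assumes "order_unit_space A" "\<mu> \<in> state_space A" "a \<in> A"
  shows "\<bar>\<mu> a\<bar> \<le> norm a"
proof -
  have ip: "\<bar>inner (blinfun_apply a x) x\<bar> \<le> norm a * inner x x" for x
  proof -
    have "\<bar>inner (blinfun_apply a x) x\<bar> \<le> norm (blinfun_apply a x) * norm x"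
      by (rule Cauchy_Schwarz_ineq2)
    also have "\<dots> \<le> norm a * norm x * norm x"
      by (simp add: mult_right_mono norm_blinfun)
    finally show ?thesis by (simp add: power2_eq_square[symmetric] power2_norm_eq_inner mult.assoc)
  qed
  have idA: "id_blinfun \<in> A" using ous_facts(2)[OF assms(1)] .
  have cA: "norm a *\<^sub>R id_blinfun \<in> A" using ous_facts(6)[OF assms(1) idA] .
  have p1: "op_le 0 (norm a *\<^sub>R id_blinfun - a)"
    unfolding op_le_def proof fix x show "inner (blinfun_apply 0 x) x \<le> inner (blinfun_apply (norm a *\<^sub>R id_blinfun - a) x) x" using ip[of x] by (simp add: blinfun.bilinear_simps inner_diff_left abs_le_iff) qed
  have p2: "op_le 0 (norm a *\<^sub>R id_blinfun + a)"
    unfolding op_le_def proof fix x show "inner (blinfun_apply 0 x) x \<le> inner (blinfun_apply (norm a *\<^sub>R id_blinfun + a) x) x" using ip[of x] by (simp add: blinfun.bilinear_simps inner_add_left abs_le_iff) qed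
  have "0 \<le> \<mu> (norm a *\<^sub>R id_blinfun - a)"
    using state_facts(4)[OF assms(1,2) _ p1] ous_facts(5)[OF assms(1) cA assms(3)] by simp
  moreover have "0 \<le> \<mu> (norm a *\<^sub>R id_blinfun + a)"
    using state_facts(4)[OF assms(1,2) _ p2] ous_facts(4)[OF assms(1) cA assms(3)] by simp
  ultimately show ?thesis
    using state_diff[OF assms(1,2) cA assms(3)] state_facts(1)[OF assms(1,2) cA assms(3)]
      state_facts(2)[OF assms(1,2) idA] state_facts(3)[OF assms(1,2)] by auto
qed

definition vstate :: "('h::{real_inner,complete_space} \<Rightarrow>\<^sub>L 'h) set \<Rightarrow> 'h \<Rightarrow> (('h \<Rightarrow>\<^sub>L 'h) \<Rightarrow> real)" where
  "vstate A x = (\<lambda>b. if b \<in> A then inner (blinfun_apply b x) x else 0)"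

lemma vstate_in:
  assumes "order_unit_space A" "norm x = 1"
  shows "vstate A x \<in> state_space A"
proof -
  have "inner x x = 1" using assms(2) by (metis norm_eq_sqrt_inner real_sqrt_eq_1_iff)
  then show ?thesis
    using ous_facts[OF assms(1)]
    unfolding state_space_def vstate_def op_le_def
    by (auto simp: blinfun.bilinear_simps inner_add_left)
qed

lemma numrad:
  fixes b :: "'h::{real_inner,complete_space} \<Rightarrow>\<^sub>L 'h"
  assumes sa: "\<And>x y. inner (blinfun_apply b x) y = inner x (blinfun_apply b y)"
    and w: "0 \<le> w" and h: "\<And>x. \<bar>inner (blinfun_apply b x) x\<bar> \<le> w * (norm x)^2"
  shows "norm b \<le> w"
proof (rule norm_blinfun_bound[OF w])
  fix x
  define y where "y = blinfun_apply b x"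
  show "norm (blinfun_apply b x) \<le> w * norm x"
  proof (cases "y = 0")
    case True then show ?thesis using w by (simp add: y_def)
  next
    case False
    then have x0: "x \<noteq> 0" unfolding y_def by auto
    have pol: "4 * inner (blinfun_apply b u) v \<le> 2 * w * ((norm u)^2 + (norm v)^2)" for u v
    proof -
      have e: "inner (blinfun_apply b (u+v)) (u+v) - inner (blinfun_apply b (u-v)) (u-v)
             = 2 * inner (blinfun_apply b u) v + 2 * inner (blinfun_apply b v) u"
        by (simp add: blinfun.add_right blinfun.diff_right inner_add_left inner_add_right
            inner_diff_left inner_diff_right)
      have s: "inner (blinfun_apply b v) u = inner (blinfun_apply b u) v"
        using sa[of v u] by (simp add: inner_commute)
      have "inner (blinfun_apply b (u+v)) (u+v) \<le> w * (norm (u+v))^2" using h[of "u+v"] by auto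
      moreover have "- inner (blinfun_apply b (u-v)) (u-v) \<le> w * (norm (u-v))^2" using h[of "u-v"] by auto
      moreover have "(norm (u+v))^2 + (norm (u-v))^2 = 2 * ((norm u)^2 + (norm v)^2)"
        by (simp add: power2_norm_eq_inner inner_add_left inner_add_right inner_diff_left inner_diff_right inner_commute)
      ultimately have "4 * inner (blinfun_apply b u) v \<le> w * (norm (u+v))^2 + w * (norm (u-v))^2"
        using e s by linarith
      also have "\<dots> = w * ((norm (u+v))^2 + (norm (u-v))^2)" by (simp add: algebra_simps)
      also have "\<dots> = 2 * w * ((norm u)^2 + (norm v)^2)" using \<open>(norm (u+v))^2 + (norm (u-v))^2 = _\<close> by simp
      finally show ?thesis .
    qed
    define t where "t = sqrt (norm y / norm x)"
    have nx: "norm x > 0" "norm y > 0" using x0 False by auto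
    have tp: "t > 0" using nx by (simp add: t_def)
    have t2: "t^2 = norm y / norm x" using nx by (simp add: t_def)
    have "4 * inner (blinfun_apply b (t *\<^sub>R x)) ((1/t) *\<^sub>R y) \<le> 2 * w * ((norm (t *\<^sub>R x))^2 + (norm ((1/t) *\<^sub>R y))^2)"
      by (rule pol)
    moreover have "inner (blinfun_apply b (t *\<^sub>R x)) ((1/t) *\<^sub>R y) = (norm y)^2"
      using tp by (simp add: blinfun.scaleR_right y_def power2_norm_eq_inner)
    moreover have "(norm (t *\<^sub>R x))^2 = norm y * norm x"
      using tp t2 nx by (simp add: power_mult_distrib power2_eq_square field_simps)
    moreover have "(norm ((1/t) *\<^sub>R y))^2 = norm y * norm x"
      using tp t2 nx by (simp add: power_mult_distrib power_divide field_simps power2_eq_square)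
    ultimately have "4 * (norm y)^2 \<le> 4 * w * norm x * norm y" by (simp add: algebra_simps)
    then have "norm y * norm y \<le> (w * norm x) * norm y" by (simp add: power2_eq_square algebra_simps)
    then have "norm y \<le> w * norm x" using nx(2) by (rule mult_right_le_imp_le)
    then show ?thesis by (simp add: y_def)
  qed
qed

lemma states_norm:
  assumes ou: "order_unit_space A" and aA: "a \<in> A" and M: "0 \<le> M"
    and h: "\<And>\<mu>. \<mu> \<in> state_space A \<Longrightarrow> \<bar>\<mu> a\<bar> \<le> M"
  shows "norm a \<le> M"
proof (rule numrad[OF _ M])
  show "inner (blinfun_apply a x) y = inner x (blinfun_apply a y)" for x y
    using ous_facts(7)[OF ou aA] unfolding self_adjoint_def by blast
  show "\<bar>inner (blinfun_apply a x) x\<bar> \<le> M * (norm x)^2" for x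
  proof (cases "x = 0")
    case True then show ?thesis by simp
  next
    case False
    define u where "u = (1 / norm x) *\<^sub>R x"
    have nu: "norm u = 1" using False by (simp add: u_def)
    have "\<bar>vstate A u a\<bar> \<le> M" using h[OF vstate_in[OF ou nu]] .
    then have c: "\<bar>inner (blinfun_apply a u) u\<bar> \<le> M" using aA by (simp add: vstate_def)
    have xu: "x = norm x *\<^sub>R u" using False by (simp add: u_def)
    have "inner (blinfun_apply a x) x = (norm x)^2 * inner (blinfun_apply a u) u"
      by (subst (1 2) xu) (simp add: blinfun.scaleR_right power2_eq_square)
    then have "\<bar>inner (blinfun_apply a x) x\<bar> = (norm x)^2 * \<bar>inner (blinfun_apply a u) u\<bar>"
      by (simp add: abs_mult)
    also have "\<dots> \<le> (norm x)^2 * M" using c by (simp add: mult_left_mono)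
    finally show ?thesis by (simp add: mult.commute)
  qed
qed

lemma empty_states_trivial:
  fixes A :: "('h::{real_inner,complete_space} \<Rightarrow>\<^sub>L 'h) set"
  assumes ou: "order_unit_space A" and e: "state_space A = {}"
  shows "(x::'h) = 0"
proof (rule ccontr)
  assume "x \<noteq> 0"
  then have "norm ((1 / norm x) *\<^sub>R x) = 1" by simp
  from vstate_in[OF ou this] e show False by simp
qed

lemma empty_states_zero:
  fixes A :: "('h::{real_inner,complete_space} \<Rightarrow>\<^sub>L 'h) set"
  assumes ou: "order_unit_space A" and e: "state_space A = {}"
  shows "(b::'h \<Rightarrow>\<^sub>L 'h) = 0"
  by (rule blinfun_eqI) (metis blinfun.zero_left empty_states_trivial[OF ou e])

lemma qn_le: "quot_norm a \<le> norm (a - t *\<^sub>R id_blinfun)"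
  unfolding quot_norm_def by (rule cINF_lower) (auto intro: bdd_belowI[of _ 0])

lemma qn_nonneg: "0 \<le> quot_norm a"
  unfolding quot_norm_def by (rule cINF_greatest) auto

lemma qn_less:
  assumes "quot_norm a < e" shows "\<exists>t. norm (a - t *\<^sub>R id_blinfun) < e"
proof -
  have "bdd_below (range (\<lambda>t. norm (a - t *\<^sub>R id_blinfun)))" by (auto intro: bdd_belowI[of _ 0])
  then show ?thesis using assms unfolding quot_norm_def by (simp add: cINF_less_iff)
qed

lemma osc_qn:
  assumes ou: "order_unit_space A" and m: "\<mu> \<in> state_space A" and n: "\<nu> \<in> state_space A" and aA: "a \<in> A"
  shows "\<bar>\<mu> a - \<nu> a\<bar> \<le> 2 * quot_norm a"
proof -
  have "\<bar>\<mu> a - \<nu> a\<bar> / 2 \<le> norm (a - t *\<^sub>R id_blinfun)" for t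
  proof -
    define g where "g = a - t *\<^sub>R id_blinfun"
    have g: "g \<in> A" using ous_facts[OF ou] aA unfolding g_def by blast
    have b1: "\<bar>\<mu> g\<bar> \<le> norm g" by (rule state_bound[OF ou m g])
    have b2: "\<bar>\<nu> g\<bar> \<le> norm g" by (rule state_bound[OF ou n g])
    have e: "\<mu> a - \<nu> a = \<mu> g - \<nu> g"
      using state_sub_const[OF ou m aA, of t] state_sub_const[OF ou n aA, of t] unfolding g_def by simp
    have "\<bar>\<mu> a - \<nu> a\<bar> \<le> \<bar>\<mu> g\<bar> + \<bar>\<nu> g\<bar>" unfolding e by (rule abs_triangle_ineq4)
    also have "\<dots> \<le> norm g + norm g" using b1 b2 by (rule add_mono)
    finally show ?thesis unfolding g_def by simp
  qed
  then have "\<bar>\<mu> a - \<nu> a\<bar> / 2 \<le> quot_norm a" unfolding quot_norm_def by (intro cINF_greatest) auto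
  then show ?thesis by simp
qed

lemma rho_ge:
  assumes "a \<in> lip_ball A L" shows "ereal \<bar>\<mu> a - \<nu> a\<bar> \<le> rho_L A L \<mu> \<nu>"
  unfolding rho_L_def using assms by (rule SUP_upper)

lemma rho_le:
  assumes "\<And>a. a \<in> lip_ball A L \<Longrightarrow> \<bar>\<mu> a - \<nu> a\<bar> \<le> c" shows "rho_L A L \<mu> \<nu> \<le> ereal c"
  unfolding rho_L_def using assms by (intro SUP_least) simp

lemma rho_lt:
  assumes "rho_L A L \<mu> \<nu> < ereal r" "a \<in> lip_ball A L" shows "\<bar>\<mu> a - \<nu> a\<bar> < r"
proof -
  have "ereal \<bar>\<mu> a - \<nu> a\<bar> < ereal r" using rho_ge[OF assms(2), of \<mu> \<nu>] assms(1) by (rule le_less_trans)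
  then show ?thesis by simp
qed

lemma rho_sym: "rho_L A L \<mu> \<nu> = rho_L A L \<nu> \<mu>"
  unfolding rho_L_def by (simp add: abs_minus_commute)

lemma L_facts:
  assumes ou: "order_unit_space A" and sn: "seminorm_on A L"
  shows "L 0 = 0" "\<And>a. a \<in> A \<Longrightarrow> 0 \<le> L a" "0 \<in> lip_ball A L"
    "\<And>a. a \<in> A \<Longrightarrow> (1 / (L a + 1)) *\<^sub>R a \<in> lip_ball A L"
    "lip_ball A L \<subseteq> A"
proof -
  have add: "\<And>a b. a \<in> A \<Longrightarrow> b \<in> A \<Longrightarrow> L (a + b) \<le> L a + L b"
    and sc: "\<And>t a. a \<in> A \<Longrightarrow> L (t *\<^sub>R a) = \<bar>t\<bar> * L a"
    using sn unfolding seminorm_on_def by blast+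
  have i: "id_blinfun \<in> A" using ous_facts(2)[OF ou] .
  show L0: "L 0 = 0" using sc[OF i, of 0] by simp
  show nn: "0 \<le> L a" if "a \<in> A" for a
  proof -
    have m: "(-1) *\<^sub>R a \<in> A" using ous_facts(6)[OF ou that] .
    have "L (a + (-1) *\<^sub>R a) \<le> L a + L ((-1) *\<^sub>R a)" using add[OF that m] .
    moreover have "L ((-1) *\<^sub>R a) = L a" using sc[OF that, of "-1"] by simp
    moreover have "a + (-1) *\<^sub>R a = 0" by simp
    ultimately show ?thesis using L0 by simp
  qed
  show "0 \<in> lip_ball A L" using L0 ous_facts(3)[OF ou] unfolding lip_ball_def by simp
  show "(1 / (L a + 1)) *\<^sub>R a \<in> lip_ball A L" if "a \<in> A" for a
  proof -
    have p: "0 < L a + 1" using nn[OF that] by simp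
    have "L ((1 / (L a + 1)) *\<^sub>R a) = L a / (L a + 1)" using sc[OF that, of "1 / (L a + 1)"] p by simp
    also have "\<dots> \<le> 1" using p by simp
    finally show ?thesis using ous_facts(6)[OF ou that] unfolding lip_ball_def by simp
  qed
  show "lip_ball A L \<subseteq> A" unfolding lip_ball_def by blast
qed

lemma part_a:
  assumes ou: "order_unit_space A" and sn: "seminorm_on A L"
  shows "(\<exists>M::real. \<forall>\<mu>\<in>state_space A. \<forall>\<nu>\<in>state_space A. rho_L A L \<mu> \<nu> \<le> ereal M)
            \<longleftrightarrow> (\<exists>M::real. \<forall>a\<in>lip_ball A L. quot_norm a \<le> M)"
proof
  assume "\<exists>M::real. \<forall>\<mu>\<in>state_space A. \<forall>\<nu>\<in>state_space A. rho_L A L \<mu> \<nu> \<le> ereal M"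
  then obtain M where M: "\<And>\<mu> \<nu>. \<mu>\<in>state_space A \<Longrightarrow> \<nu>\<in>state_space A \<Longrightarrow> rho_L A L \<mu> \<nu> \<le> ereal M" by blast
  show "\<exists>M::real. \<forall>a\<in>lip_ball A L. quot_norm a \<le> M"
  proof (intro exI ballI)
    fix a assume aB: "a \<in> lip_ball A L"
    have aA: "a \<in> A" using aB L_facts(5)[OF ou sn] by blast
    show "quot_norm a \<le> max M 0"
    proof (cases "state_space A = {}")
      case True
      have "quot_norm a \<le> norm (a - 0 *\<^sub>R id_blinfun)" by (rule qn_le)
      also have "\<dots> = 0" using empty_states_zero[OF ou True, of a] by simp
      finally show ?thesis by simp
    next
      case False
      then obtain \<mu>0 where m0: "\<mu>0 \<in> state_space A" by blast
      have bA: "a - \<mu>0 a *\<^sub>R id_blinfun \<in> A" using ous_facts[OF ou] aA by blast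
      have "norm (a - \<mu>0 a *\<^sub>R id_blinfun) \<le> max M 0"
      proof (rule states_norm[OF ou bA])
        fix \<mu> assume m: "\<mu> \<in> state_space A"
        have "ereal \<bar>\<mu> a - \<mu>0 a\<bar> \<le> ereal M" using rho_ge[OF aB, of \<mu> \<mu>0] M[OF m m0] by (rule order.trans)
        then show "\<bar>\<mu> (a - \<mu>0 a *\<^sub>R id_blinfun)\<bar> \<le> max M 0" using state_sub_const[OF ou m aA] by simp
      qed simp
      then show ?thesis using qn_le[of a "\<mu>0 a"] by linarith
    qed
  qed
next
  assume "\<exists>M::real. \<forall>a\<in>lip_ball A L. quot_norm a \<le> M"
  then obtain M where M: "\<And>a. a \<in> lip_ball A L \<Longrightarrow> quot_norm a \<le> M" by blast
  show "\<exists>M::real. \<forall>\<mu>\<in>state_space A. \<forall>\<nu>\<in>state_space A. rho_L A L \<mu> \<nu> \<le> ereal M"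
  proof (intro exI ballI)
    fix \<mu> \<nu> assume m: "\<mu> \<in> state_space A" and n: "\<nu> \<in> state_space A"
    show "rho_L A L \<mu> \<nu> \<le> ereal (2 * M)"
    proof (rule rho_le)
      fix a assume aB: "a \<in> lip_ball A L"
      have aA: "a \<in> A" using aB L_facts(5)[OF ou sn] by blast
      show "\<bar>\<mu> a - \<nu> a\<bar> \<le> 2 * M" using osc_qn[OF ou m n aA] M[OF aB] by linarith
    qed
  qed
qed

lemma open_vimage_UNIV: "continuous_on UNIV f \<Longrightarrow> open B \<Longrightarrow> open (f -` B)"
  using continuous_on_open_vimage[OF open_UNIV, of f] by simp

lemma topspace_ws:
  assumes ou: "order_unit_space A"
  shows "topspace (weak_star_topology A) = state_space A"
proof -
  have "state_space A \<in> {{\<mu> \<in> state_space A. \<mu> a \<in> U} | a U. a \<in> A \<and> open U}"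
    using ous_facts(2)[OF ou] by (intro CollectI exI[of _ id_blinfun] exI[of _ UNIV]) auto
  then show ?thesis unfolding weak_star_topology_def topology_generated_by_topspace by blast
qed

lemma rho_self: "rho_L A L \<mu> \<mu> \<le> 0"
  using rho_le[of A L \<mu> \<mu> 0] by (simp add: zero_ereal_def)

lemma ball_gen:
  assumes "\<mu> \<in> state_space A" "r > 0"
  shows "openin (rho_topology A L) {\<nu> \<in> state_space A. rho_L A L \<mu> \<nu> < ereal r}"
  unfolding rho_topology_def by (rule topology_generated_by_Basis) (use assms in blast)

lemma ws_gen:
  assumes "a \<in> A" "open U"
  shows "openin (weak_star_topology A) {\<mu> \<in> state_space A. \<mu> a \<in> U}"
  unfolding weak_star_topology_def by (rule topology_generated_by_Basis) (use assms in blast)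

lemma topspace_rho:
  shows "topspace (rho_topology A L) = state_space A"
proof -
  let ?G = "{{\<nu> \<in> state_space A. rho_L A L \<mu> \<nu> < ereal r} | \<mu> r. \<mu> \<in> state_space A \<and> r > 0}"
  have "\<mu> \<in> \<Union>?G" if m: "\<mu> \<in> state_space A" for \<mu>
  proof -
    have "\<mu> \<in> {\<nu> \<in> state_space A. rho_L A L \<mu> \<nu> < ereal 1}"
      using rho_self[of A L \<mu>] m by (simp add: le_less_trans)
    moreover have "{\<nu> \<in> state_space A. rho_L A L \<mu> \<nu> < ereal 1} \<in> ?G" using m by force
    ultimately show ?thesis by blast
  qed
  moreover have "\<Union>?G \<subseteq> state_space A" by blast
  ultimately show ?thesis unfolding rho_topology_def topology_generated_by_topspace by blast
qed

lemma gen_open: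
  assumes "\<And>s. s \<in> G \<Longrightarrow> openin T s" "openin (topology_generated_by G) U"
  shows "openin T U"
  using openin_topology_generated_by[OF assms(2)]
  by (induct rule: generate_topology_on.induct) (auto intro: assms(1))

lemma ws_open_in_rho:
  assumes ou: "order_unit_space A" and sn: "seminorm_on A L"
    and aA: "a \<in> A" and U: "open U"
  shows "openin (rho_topology A L) {\<mu> \<in> state_space A. \<mu> a \<in> U}"
proof (subst openin_subopen, intro ballI)
  fix \<mu> assume "\<mu> \<in> {\<mu> \<in> state_space A. \<mu> a \<in> U}"
  then have m: "\<mu> \<in> state_space A" and mu: "\<mu> a \<in> U" by auto
  obtain e where e: "e > 0" "ball (\<mu> a) e \<subseteq> U" using U mu openE by blast
  define c where "c = L a + 1"
  have c: "c > 0" using L_facts(2)[OF ou sn aA] by (simp add: c_def)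
  have bB: "(1 / c) *\<^sub>R a \<in> lip_ball A L" using L_facts(4)[OF ou sn aA] by (simp add: c_def)
  let ?V = "{\<nu> \<in> state_space A. rho_L A L \<mu> \<nu> < ereal (e / c)}"
  show "\<exists>T. openin (rho_topology A L) T \<and> \<mu> \<in> T \<and> T \<subseteq> {\<mu> \<in> state_space A. \<mu> a \<in> U}"
  proof (intro exI conjI)
    show "openin (rho_topology A L) ?V" using ball_gen[OF m] e c by simp
    show "\<mu> \<in> ?V" using m rho_self[of A L \<mu>] e c by (simp add: le_less_trans)
    show "?V \<subseteq> {\<mu> \<in> state_space A. \<mu> a \<in> U}"
    proof
      fix \<nu> assume "\<nu> \<in> ?V"
      then have n: "\<nu> \<in> state_space A" and r: "rho_L A L \<mu> \<nu> < ereal (e / c)" by auto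
      have "\<bar>\<mu> ((1 / c) *\<^sub>R a) - \<nu> ((1 / c) *\<^sub>R a)\<bar> < e / c" by (rule rho_lt[OF r bB])
      moreover have "\<mu> ((1 / c) *\<^sub>R a) - \<nu> ((1 / c) *\<^sub>R a) = (\<mu> a - \<nu> a) / c"
        using state_facts(2)[OF ou m aA] state_facts(2)[OF ou n aA] by (simp add: diff_divide_distrib)
      ultimately have "\<bar>\<mu> a - \<nu> a\<bar> / c < e / c" using c by (simp add: abs_of_pos)
      then have "\<bar>\<mu> a - \<nu> a\<bar> < e" using c by (simp add: divide_less_cancel)
      then have "\<nu> a \<in> ball (\<mu> a) e" by (simp add: dist_real_def)
      then show "\<nu> \<in> {\<mu> \<in> state_space A. \<mu> a \<in> U}" using n e by auto
    qed
  qed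
qed

lemma rho_ball_open_in_ws:
  assumes ou: "order_unit_space A" and sn: "seminorm_on A L"
    and tb: "quot_totally_bounded (lip_ball A L)"
    and m: "\<mu> \<in> state_space A"
  shows "openin (weak_star_topology A) {\<nu> \<in> state_space A. rho_L A L \<mu> \<nu> < ereal r}"
proof (subst openin_subopen, intro ballI)
  fix \<nu> assume "\<nu> \<in> {\<nu> \<in> state_space A. rho_L A L \<mu> \<nu> < ereal r}"
  then have n: "\<nu> \<in> state_space A" and r: "rho_L A L \<mu> \<nu> < ereal r" by auto
  obtain d where d: "rho_L A L \<mu> \<nu> < ereal d" "ereal d < ereal r" using ereal_dense2[OF r] by blast
  define \<epsilon> where "\<epsilon> = (r - d) / 4"
  have ep: "\<epsilon> > 0" using d(2) by (simp add: \<epsilon>_def)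
  obtain F where F: "finite F" "F \<subseteq> lip_ball A L"
      "\<And>a. a \<in> lip_ball A L \<Longrightarrow> \<exists>f\<in>F. quot_norm (a - f) < \<epsilon>"
    using tb ep unfolding quot_totally_bounded_def by meson
  define F' where "F' = insert id_blinfun F"
  have F'A: "F' \<subseteq> A" using F(2) L_facts(5)[OF ou sn] ous_facts(2)[OF ou] by (auto simp: F'_def)
  define V where "V = (\<Inter>f\<in>F'. {\<nu>' \<in> state_space A. \<nu>' f \<in> ball (\<nu> f) \<epsilon>})"
  show "\<exists>T. openin (weak_star_topology A) T \<and> \<nu> \<in> T \<and> T \<subseteq> {\<nu> \<in> state_space A. rho_L A L \<mu> \<nu> < ereal r}"
  proof (intro exI conjI)
    show "openin (weak_star_topology A) V" unfolding V_def
      using F(1) F'A by (intro openin_INT2 ws_gen) (auto simp: F'_def)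
    show "\<nu> \<in> V" unfolding V_def using n ep by auto
    show "V \<subseteq> {\<nu> \<in> state_space A. rho_L A L \<mu> \<nu> < ereal r}"
    proof
      fix \<nu>' assume v: "\<nu>' \<in> V"
      have n': "\<nu>' \<in> state_space A" using v unfolding V_def F'_def by auto
      have close: "\<bar>\<nu>' f - \<nu> f\<bar> < \<epsilon>" if "f \<in> F" for f
        using v that unfolding V_def F'_def by (auto simp: dist_real_def abs_minus_commute)
      have "rho_L A L \<mu> \<nu>' \<le> ereal (d + 3 * \<epsilon>)"
      proof (rule rho_le)
        fix a assume aB: "a \<in> lip_ball A L"
        have aA: "a \<in> A" using aB L_facts(5)[OF ou sn] by blast
        obtain f where f: "f \<in> F" "quot_norm (a - f) < \<epsilon>" using F(3)[OF aB] by blast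
        have fA: "f \<in> A" using f(1) F(2) L_facts(5)[OF ou sn] by blast
        obtain t where t: "norm (a - f - t *\<^sub>R id_blinfun) < \<epsilon>" using qn_less[OF f(2)] by blast
        define g where "g = a - f - t *\<^sub>R id_blinfun"
        have afA: "a - f \<in> A" using ous_facts(5)[OF ou aA fA] .
        have gA: "g \<in> A" unfolding g_def using ous_facts[OF ou] afA by blast
        have g1: "\<nu>' g = \<nu>' a - \<nu>' f - t"
          unfolding g_def using state_sub_const[OF ou n' afA] state_diff[OF ou n' aA fA] by simp
        have g2: "\<nu> g = \<nu> a - \<nu> f - t"
          unfolding g_def using state_sub_const[OF ou n afA] state_diff[OF ou n aA fA] by simp
        have b1: "\<bar>\<nu>' g\<bar> < \<epsilon>" using state_bound[OF ou n' gA] t unfolding g_def by simp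
        have b2: "\<bar>\<nu> g\<bar> < \<epsilon>" using state_bound[OF ou n gA] t unfolding g_def by simp
        have b3: "\<bar>\<nu>' f - \<nu> f\<bar> < \<epsilon>" using close[OF f(1)] .
        have b4: "\<bar>\<mu> a - \<nu> a\<bar> < d" using rho_lt[OF d(1) aB] .
        show "\<bar>\<mu> a - \<nu>' a\<bar> \<le> d + 3 * \<epsilon>"
          using b1 b2 b3 b4 g1 g2 unfolding abs_less_iff abs_le_iff by linarith
      qed
      also have "\<dots> < ereal r" using d(2) by (simp add: \<epsilon>_def field_simps)
      finally show "\<nu>' \<in> {\<nu> \<in> state_space A. rho_L A L \<mu> \<nu> < ereal r}" using n' by simp
    qed
  qed
qed

lemma part_b_if:
  assumes ou: "order_unit_space A" and sn: "seminorm_on A L"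
    and tb: "quot_totally_bounded (lip_ball A L)"
  shows "rho_topology A L = weak_star_topology A"
proof (rule topology_eq[THEN iffD2], intro allI iffI)
  fix U assume "openin (rho_topology A L) U"
  then show "openin (weak_star_topology A) U"
    unfolding rho_topology_def
    by (rule gen_open[rotated]) (auto intro: rho_ball_open_in_ws[OF ou sn tb])
next
  fix U assume "openin (weak_star_topology A) U"
  then show "openin (rho_topology A L) U"
    unfolding weak_star_topology_def
    by (rule gen_open[rotated]) (auto intro: ws_open_in_rho[OF ou sn])
qed

lemma ws_gens_Union:
  assumes ou: "order_unit_space A"
  shows "\<Union>{{\<mu> \<in> state_space A. \<mu> a \<in> U} | a U. a \<in> A \<and> open U} = state_space A"
  using topspace_ws[OF ou] unfolding weak_star_topology_def topology_generated_by_topspace .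

lemma ws_compact:
  assumes ou: "order_unit_space A"
  shows "compactin (weak_star_topology A) (state_space A)"
proof -
  define X where "X b = (if b \<in> A then {-norm b..norm b} else {0::real})" for b
  have "compactin (product_topology (\<lambda>_. euclidean) UNIV) (PiE UNIV X)"
    by (subst compactin_PiE) (auto simp: X_def)
  then have K: "compact (PiE UNIV X)" using euclidean_product_topology by (metis compactin_euclidean_iff)
  let ?C1 = "\<Inter>a\<in>A. \<Inter>b\<in>A. {\<mu>::('a \<Rightarrow>\<^sub>L 'a) \<Rightarrow> real. \<mu> (a + b) = \<mu> a + \<mu> b}"
  let ?C2 = "\<Inter>t. \<Inter>a\<in>A. {\<mu>::('a \<Rightarrow>\<^sub>L 'a) \<Rightarrow> real. \<mu> (t *\<^sub>R a) = t * \<mu> a}"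
  let ?C3 = "\<Inter>a\<in>{a\<in>A. op_le 0 a}. {\<mu>::('a \<Rightarrow>\<^sub>L 'a) \<Rightarrow> real. 0 \<le> \<mu> a}"
  let ?C4 = "{\<mu>::('a \<Rightarrow>\<^sub>L 'a) \<Rightarrow> real. \<mu> id_blinfun = 1}"
  let ?C5 = "\<Inter>a\<in>-A. {\<mu>::('a \<Rightarrow>\<^sub>L 'a) \<Rightarrow> real. \<mu> a = 0}"
  have Seq: "state_space A = ?C1 \<inter> ?C2 \<inter> ?C3 \<inter> ?C4 \<inter> ?C5"
    unfolding state_space_def by blast
  have co: "continuous_on UNIV (\<lambda>\<mu>::('a \<Rightarrow>\<^sub>L 'a) \<Rightarrow> real. \<mu> a)" for a by simp
  have c1: "closed ?C1"
  proof (intro closed_INT ballI)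
    fix a b :: "'a \<Rightarrow>\<^sub>L 'a"
    show "closed {\<mu>::('a \<Rightarrow>\<^sub>L 'a) \<Rightarrow> real. \<mu> (a + b) = \<mu> a + \<mu> b}"
      by (rule closed_Collect_eq[OF co continuous_on_add[OF co co]])
  qed
  have c2: "closed ?C2"
  proof (intro closed_INT ballI)
    fix t and a :: "'a \<Rightarrow>\<^sub>L 'a"
    show "closed {\<mu>::('a \<Rightarrow>\<^sub>L 'a) \<Rightarrow> real. \<mu> (t *\<^sub>R a) = t * \<mu> a}"
      by (rule closed_Collect_eq[OF co continuous_on_mult[OF continuous_on_const co]])
  qed
  have c3: "closed ?C3"
  proof (intro closed_INT ballI)
    fix a :: "'a \<Rightarrow>\<^sub>L 'a"
    show "closed {\<mu>::('a \<Rightarrow>\<^sub>L 'a) \<Rightarrow> real. 0 \<le> \<mu> a}"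
      by (rule closed_Collect_le[OF continuous_on_const co])
  qed
  have c4: "closed ?C4" by (rule closed_Collect_eq[OF co continuous_on_const])
  have c5: "closed ?C5"
  proof (intro closed_INT ballI)
    fix a :: "'a \<Rightarrow>\<^sub>L 'a"
    show "closed {\<mu>::('a \<Rightarrow>\<^sub>L 'a) \<Rightarrow> real. \<mu> a = 0}"
      by (rule closed_Collect_eq[OF co continuous_on_const])
  qed
  have cS: "closed (state_space A)" unfolding Seq using c1 c2 c3 c4 c5 by (intro closed_Int)
  have sub: "state_space A \<subseteq> PiE UNIV X"
  proof
    fix \<mu> assume m: "\<mu> \<in> state_space A"
    have "\<mu> b \<in> X b" for b
      using state_bound[OF ou m, of b] state_facts(5)[OF ou m, of b] by (auto simp: X_def abs_le_iff)
    then show "\<mu> \<in> PiE UNIV X" by (simp add: PiE_UNIV_domain)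
  qed
  have "compact (PiE UNIV X \<inter> state_space A)" using K cS by (rule compact_Int_closed)
  moreover have "PiE UNIV X \<inter> state_space A = state_space A" using sub by blast
  ultimately have cpt: "compact (state_space A)" by simp
  then have c0: "compactin (top_of_set (state_space A)) (state_space A)"
    by (simp add: compactin_subtopology)
  have cm: "continuous_map (top_of_set (state_space A)) (weak_star_topology A) id"
    unfolding weak_star_topology_def continuous_on_generated_topo_iff
  proof (intro conjI allI impI)
    fix U assume "U \<in> {{\<mu> \<in> state_space A. \<mu> a \<in> U} | a U. a \<in> A \<and> open U}"
    then obtain a V where U: "U = {\<mu> \<in> state_space A. \<mu> a \<in> V}" and V: "open V" by blast
    have "id -` U \<inter> topspace (top_of_set (state_space A)) = state_space A \<inter> ((\<lambda>\<mu>. \<mu> a) -` V)"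
      unfolding U by auto
    moreover have "open ((\<lambda>\<mu>::('a \<Rightarrow>\<^sub>L 'a) \<Rightarrow> real. \<mu> a) -` V)" by (rule open_vimage_UNIV[OF co V])
    ultimately show "openin (top_of_set (state_space A)) (id -` U \<inter> topspace (top_of_set (state_space A)))"
      by (simp add: openin_open_Int)
  next
    show "id ` topspace (top_of_set (state_space A)) \<subseteq> \<Union>{{\<mu> \<in> state_space A. \<mu> a \<in> U} | a U. a \<in> A \<and> open U}"
      using ws_gens_Union[OF ou] by simp
  qed
  show ?thesis using image_compactin[OF c0 cm] by simp
qed

lemma conv_state:
  assumes ou: "order_unit_space A" and m: "\<mu> \<in> state_space A" and n: "\<nu> \<in> state_space A"
    and t: "0 \<le> t" "t \<le> 1"
  shows "(\<lambda>b. (1 - t) * \<mu> b + t * \<nu> b) \<in> state_space A"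
  unfolding state_space_def
proof (intro CollectI conjI ballI allI impI)
  note sm = state_facts[OF ou m] and sn = state_facts[OF ou n]
  fix a b assume "a \<in> A" "b \<in> A"
  then show "(1 - t) * \<mu> (a + b) + t * \<nu> (a + b) = (1 - t) * \<mu> a + t * \<nu> a + ((1 - t) * \<mu> b + t * \<nu> b)"
    using sm(1) sn(1) by (simp add: algebra_simps)
next
  note sm = state_facts[OF ou m] and sn = state_facts[OF ou n]
  fix s a assume "a \<in> A"
  then show "(1 - t) * \<mu> (s *\<^sub>R a) + t * \<nu> (s *\<^sub>R a) = s * ((1 - t) * \<mu> a + t * \<nu> a)"
    using sm(2) sn(2) by (simp add: algebra_simps)
next
  note sm = state_facts[OF ou m] and sn = state_facts[OF ou n]
  fix a assume "a \<in> A" "op_le 0 a"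
  then show "0 \<le> (1 - t) * \<mu> a + t * \<nu> a"
    using sm(4) sn(4) t by simp
next
  note sm = state_facts[OF ou m] and sn = state_facts[OF ou n]
  show "(1 - t) * \<mu> id_blinfun + t * \<nu> id_blinfun = 1" using sm(3) sn(3) by simp
next
  note sm = state_facts[OF ou m] and sn = state_facts[OF ou n]
  fix a assume "a \<notin> A"
  then show "(1 - t) * \<mu> a + t * \<nu> a = 0" using sm(5) sn(5) by simp
qed

lemma fin_diff:
  assumes ou: "order_unit_space A" and sn: "seminorm_on A L"
    and eq: "rho_topology A L = weak_star_topology A"
    and m: "\<mu> \<in> state_space A" and n: "\<nu> \<in> state_space A"
  shows "\<exists>M. \<forall>a\<in>lip_ball A L. \<bar>\<mu> a - \<nu> a\<bar> \<le> M"
proof -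
  define cs where "cs t = (\<lambda>b. (1 - t) * \<mu> b + t * \<nu> b)" for t
  have csS: "cs t \<in> state_space A" if "t \<in> {0..1}" for t
    using conv_state[OF ou m n] that unfolding cs_def by auto
  have cm: "continuous_map (top_of_set {0..1::real}) (weak_star_topology A) cs"
    unfolding weak_star_topology_def continuous_on_generated_topo_iff
  proof (intro conjI allI impI)
    fix U assume "U \<in> {{\<mu> \<in> state_space A. \<mu> a \<in> U} | a U. a \<in> A \<and> open U}"
    then obtain a V where U: "U = {\<mu> \<in> state_space A. \<mu> a \<in> V}" and V: "open V" by blast
    have "cs -` U \<inter> topspace (top_of_set {0..1::real}) = {0..1} \<inter> ((\<lambda>t. (1 - t) * \<mu> a + t * \<nu> a) -` V)"
      unfolding U using csS by (auto simp: cs_def)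
    moreover have "open ((\<lambda>t. (1 - t) * \<mu> a + t * \<nu> a) -` V)"
      by (rule open_vimage_UNIV[OF _ V]) (intro continuous_intros)
    ultimately show "openin (top_of_set {0..1::real}) (cs -` U \<inter> topspace (top_of_set {0..1::real}))"
      by (simp add: openin_open_Int)
  next
    show "cs ` topspace (top_of_set {0..1::real}) \<subseteq> \<Union>{{\<mu> \<in> state_space A. \<mu> a \<in> U} | a U. a \<in> A \<and> open U}"
      using ws_gens_Union[OF ou] csS by auto
  qed
  let ?B = "{\<nu> \<in> state_space A. rho_L A L \<mu> \<nu> < ereal 1}"
  have opB: "openin (weak_star_topology A) ?B" using ball_gen[OF m, of 1 L] eq by simp
  then have op: "openin (top_of_set {0..1::real}) {t \<in> {0..1}. cs t \<in> ?B}"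
    using openin_continuous_map_preimage[OF cm opB] by simp
  have cs0: "cs 0 = \<mu>" by (simp add: cs_def)
  have "0 \<in> {t \<in> {0..1::real}. cs t \<in> ?B}" using cs0 m rho_self[of A L \<mu>] by (simp add: le_less_trans)
  then obtain e where e: "e > 0" "\<And>t. t \<in> {0..1} \<Longrightarrow> dist t 0 < e \<Longrightarrow> t \<in> {t \<in> {0..1::real}. cs t \<in> ?B}"
    using op unfolding openin_euclidean_subtopology_iff by meson
  define t0 where "t0 = min (e / 2) 1"
  have t0: "t0 > 0" "t0 \<in> {0..1}" "dist t0 0 < e" using e(1) by (auto simp: t0_def dist_real_def)
  have r: "rho_L A L \<mu> (cs t0) < ereal 1" using e(2)[OF t0(2,3)] by simp
  show ?thesis
  proof (intro exI ballI)
    fix a assume aB: "a \<in> lip_ball A L"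
    have "\<bar>\<mu> a - cs t0 a\<bar> < 1" by (rule rho_lt[OF r aB])
    moreover have "\<mu> a - cs t0 a = t0 * (\<mu> a - \<nu> a)" by (simp add: cs_def algebra_simps)
    ultimately have "t0 * \<bar>\<mu> a - \<nu> a\<bar> < 1" using t0(1) by (simp add: abs_mult)
    then show "\<bar>\<mu> a - \<nu> a\<bar> \<le> 1 / t0" using t0(1) by (simp add: field_simps)
  qed
qed

lemma rho_net:
  assumes ou: "order_unit_space A" and eq: "rho_topology A L = weak_star_topology A" and ep: "\<epsilon> > 0"
  shows "\<exists>G. finite G \<and> G \<subseteq> state_space A \<and> (\<forall>\<nu>\<in>state_space A. \<exists>g\<in>G. rho_L A L g \<nu> < ereal \<epsilon>)"
proof -
  define bl where "bl \<mu> = {\<nu> \<in> state_space A. rho_L A L \<mu> \<nu> < ereal \<epsilon>}" for \<mu>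
  have opn: "\<forall>B\<in>bl ` state_space A. openin (weak_star_topology A) B"
    using ball_gen[OF _ ep, of _ A L] eq unfolding bl_def by auto
  have cov: "state_space A \<subseteq> \<Union>(bl ` state_space A)"
  proof
    fix \<mu> assume m: "\<mu> \<in> state_space A"
    then have "\<mu> \<in> bl \<mu>" using rho_self[of A L \<mu>] ep unfolding bl_def by (simp add: le_less_trans)
    then show "\<mu> \<in> \<Union>(bl ` state_space A)" using m by blast
  qed
  obtain F where F: "finite F" "F \<subseteq> bl ` state_space A" "state_space A \<subseteq> \<Union>F"
    using ws_compact[OF ou] opn cov unfolding compactin_def by meson
  obtain G where G: "G \<subseteq> state_space A" "finite G" "F = bl ` G"
    using finite_subset_image[OF F(1,2)] by blast
  show ?thesis
  proof (intro exI conjI ballI)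
    fix \<nu> assume "\<nu> \<in> state_space A"
    then obtain g where "g \<in> G" "\<nu> \<in> bl g" using F(3) G(3) by blast
    then show "\<exists>g\<in>G. rho_L A L g \<nu> < ereal \<epsilon>" unfolding bl_def by blast
  qed (use G in auto)
qed

lemma diam_bound:
  assumes ou: "order_unit_space A" and sn: "seminorm_on A L"
    and eq: "rho_topology A L = weak_star_topology A"
  shows "\<exists>D. \<forall>\<mu>\<in>state_space A. \<forall>\<nu>\<in>state_space A. \<forall>a\<in>lip_ball A L. \<bar>\<mu> a - \<nu> a\<bar> \<le> D"
proof -
  obtain G where G: "finite G" "G \<subseteq> state_space A" "\<And>\<nu>. \<nu> \<in> state_space A \<Longrightarrow> \<exists>g\<in>G. rho_L A L g \<nu> < ereal 1"
    using rho_net[OF ou eq, of 1] by auto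
  have "\<forall>p\<in>G \<times> G. \<exists>M. \<forall>a\<in>lip_ball A L. \<bar>fst p a - snd p a\<bar> \<le> M"
    using fin_diff[OF ou sn eq] G(2) by auto
  then obtain Mf where Mf: "\<And>p a. p \<in> G \<times> G \<Longrightarrow> a \<in> lip_ball A L \<Longrightarrow> \<bar>fst p a - snd p a\<bar> \<le> Mf p"
    by (metis bchoice)
  define D0 where "D0 = (\<Sum>p\<in>G \<times> G. \<bar>Mf p\<bar>)"
  have D0: "\<bar>Mf p\<bar> \<le> D0" if "p \<in> G \<times> G" for p
    unfolding D0_def using that G(1) by (intro member_le_sum) auto
  show ?thesis
  proof (intro exI ballI)
    fix \<mu> \<nu> a assume m: "\<mu> \<in> state_space A" and n: "\<nu> \<in> state_space A" and aB: "a \<in> lip_ball A L"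
    obtain g where g: "g \<in> G" "rho_L A L g \<mu> < ereal 1" using G(3)[OF m] by blast
    obtain g' where g': "g' \<in> G" "rho_L A L g' \<nu> < ereal 1" using G(3)[OF n] by blast
    have b1: "\<bar>g a - \<mu> a\<bar> < 1" by (rule rho_lt[OF g(2) aB])
    have b2: "\<bar>g' a - \<nu> a\<bar> < 1" by (rule rho_lt[OF g'(2) aB])
    have b3: "\<bar>g a - g' a\<bar> \<le> D0" using Mf[of "(g, g')" a] D0[of "(g, g')"] g(1) g'(1) aB by force
    show "\<bar>\<mu> a - \<nu> a\<bar> \<le> D0 + 2" using b1 b2 b3 unfolding abs_less_iff abs_le_iff by linarith
  qed
qed

lemma floor_eq_close:
  fixes x y e :: real
  assumes "\<lfloor>x / e\<rfloor> = \<lfloor>y / e\<rfloor>" "e > 0"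
  shows "\<bar>x - y\<bar> < e"
proof -
  have "of_int \<lfloor>x / e\<rfloor> \<le> x / e" "x / e < of_int \<lfloor>x / e\<rfloor> + 1" by linarith+
  moreover have "of_int \<lfloor>y / e\<rfloor> \<le> y / e" "y / e < of_int \<lfloor>y / e\<rfloor> + 1" by linarith+
  ultimately have "\<bar>x / e - y / e\<bar> < 1" using assms(1) by linarith
  then have "\<bar>x - y\<bar> / e < 1" using assms(2) by (simp add: diff_divide_distrib[symmetric])
  then show ?thesis using assms(2) by (simp add: field_simps)
qed

lemma floor_bound:
  fixes x D e :: real
  assumes "\<bar>x\<bar> \<le> D" "e > 0"
  shows "\<lfloor>x / e\<rfloor> \<in> {-(\<lceil>D / e\<rceil> + 1)..\<lceil>D / e\<rceil> + 1}"
proof -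
  have "\<bar>x / e\<bar> \<le> D / e" using assms by (simp add: abs_divide divide_right_mono)
  then have "- (D / e) \<le> x / e" "x / e \<le> D / e" by linarith+
  moreover have "D / e \<le> of_int \<lceil>D / e\<rceil>" by (rule le_of_int_ceiling)
  ultimately show ?thesis by (simp, linarith)
qed

lemma part_b_only_if:
  assumes ou: "order_unit_space A" and sn: "seminorm_on A L"
    and eq: "rho_topology A L = weak_star_topology A"
  shows "quot_totally_bounded (lip_ball A L)"
  unfolding quot_totally_bounded_def
proof (intro allI impI)
  fix e :: real assume e: "e > 0"
  show "\<exists>F. finite F \<and> F \<subseteq> lip_ball A L \<and> (\<forall>a\<in>lip_ball A L. \<exists>f\<in>F. quot_norm (a - f) < e)"
  proof (cases "state_space A = {}")
    case True
    show ?thesis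
    proof (intro exI[of _ "{0}"] conjI ballI bexI)
      fix a assume "a \<in> lip_ball A L"
      show "quot_norm (a - 0) < e"
        using qn_le[of "a - 0" 0] empty_states_zero[OF ou True, of "a - 0 - 0 *\<^sub>R id_blinfun"] e by simp
    qed (use L_facts(3)[OF ou sn] in auto)
  next
    case False
    then obtain \<mu>1 where m1: "\<mu>1 \<in> state_space A" by blast
    define \<epsilon> where "\<epsilon> = e / 4"
    have ep: "\<epsilon> > 0" using e by (simp add: \<epsilon>_def)
    obtain G where G: "finite G" "G \<subseteq> state_space A" "\<And>\<nu>. \<nu> \<in> state_space A \<Longrightarrow> \<exists>g\<in>G. rho_L A L g \<nu> < ereal \<epsilon>"
      using rho_net[OF ou eq ep] by auto
    obtain \<mu>0 where m0: "\<mu>0 \<in> G" using G(3)[OF m1] by blast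
    have m0S: "\<mu>0 \<in> state_space A" using m0 G(2) by blast
    obtain D where D: "\<And>\<mu> \<nu> a. \<mu> \<in> state_space A \<Longrightarrow> \<nu> \<in> state_space A \<Longrightarrow> a \<in> lip_ball A L \<Longrightarrow> \<bar>\<mu> a - \<nu> a\<bar> \<le> D"
      using diam_bound[OF ou sn eq] by blast
    define N where "N = \<lceil>D / \<epsilon>\<rceil> + 1"
    define km where "km a = restrict (\<lambda>g. \<lfloor>(g a - \<mu>0 a) / \<epsilon>\<rfloor>) G" for a
    have kmsub: "km ` lip_ball A L \<subseteq> PiE G (\<lambda>_. {-N..N})"
    proof
      fix k assume "k \<in> km ` lip_ball A L"
      then obtain a where a: "a \<in> lip_ball A L" "k = km a" by blast
      have "\<lfloor>(g a - \<mu>0 a) / \<epsilon>\<rfloor> \<in> {-N..N}" if "g \<in> G" for g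
        unfolding N_def using floor_bound[OF D[of g \<mu>0 a] ep] that G(2) m0S a(1) by blast
      then show "k \<in> PiE G (\<lambda>_. {-N..N})" unfolding a(2) km_def by auto
    qed
    have fin: "finite (km ` lip_ball A L)"
      by (rule finite_subset[OF kmsub]) (intro finite_PiE G(1) finite_atLeastAtMost_int)
    define F where "F = inv_into (lip_ball A L) km ` (km ` lip_ball A L)"
    show ?thesis
    proof (intro exI conjI ballI)
      show "finite F" unfolding F_def using fin by simp
      show "F \<subseteq> lip_ball A L" unfolding F_def by (auto intro: inv_into_into)
      fix a assume aB: "a \<in> lip_ball A L"
      define f where "f = inv_into (lip_ball A L) km (km a)"
      have fF: "f \<in> F" unfolding F_def f_def using aB by blast
      have fB: "f \<in> lip_ball A L" unfolding f_def using aB by (auto intro: inv_into_into)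
      have kf: "km f = km a" unfolding f_def using aB by (simp add: f_inv_into_f)
      have aA: "a \<in> A" and fA: "f \<in> A" using aB fB L_facts(5)[OF ou sn] by blast+
      have closeG: "\<bar>(g a - \<mu>0 a) - (g f - \<mu>0 f)\<bar> < \<epsilon>" if "g \<in> G" for g
      proof -
        have "km a g = km f g" using kf by simp
        then have "\<lfloor>(g a - \<mu>0 a) / \<epsilon>\<rfloor> = \<lfloor>(g f - \<mu>0 f) / \<epsilon>\<rfloor>" using that by (simp add: km_def)
        then show ?thesis using ep by (rule floor_eq_close)
      qed
      define c where "c = \<mu>0 a - \<mu>0 f"
      have afA: "a - f \<in> A" using ous_facts(5)[OF ou aA fA] .
      have hA: "a - f - c *\<^sub>R id_blinfun \<in> A" using ous_facts[OF ou] afA by blast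
      have "norm (a - f - c *\<^sub>R id_blinfun) \<le> 3 * \<epsilon>"
      proof (rule states_norm[OF ou hA])
        fix \<nu> assume n: "\<nu> \<in> state_space A"
        obtain g where g: "g \<in> G" "rho_L A L g \<nu> < ereal \<epsilon>" using G(3)[OF n] by blast
        have b1: "\<bar>g a - \<nu> a\<bar> < \<epsilon>" by (rule rho_lt[OF g(2) aB])
        have b2: "\<bar>g f - \<nu> f\<bar> < \<epsilon>" by (rule rho_lt[OF g(2) fB])
        have b3: "\<bar>(g a - \<mu>0 a) - (g f - \<mu>0 f)\<bar> < \<epsilon>" by (rule closeG[OF g(1)])
        have v: "\<nu> (a - f - c *\<^sub>R id_blinfun) = \<nu> a - \<nu> f - c"
          using state_sub_const[OF ou n afA] state_diff[OF ou n aA fA] by simp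
        show "\<bar>\<nu> (a - f - c *\<^sub>R id_blinfun)\<bar> \<le> 3 * \<epsilon>"
          unfolding v using b1 b2 b3 unfolding abs_less_iff abs_le_iff c_def by linarith
      qed (use ep in simp)
      then have "quot_norm (a - f) \<le> 3 * \<epsilon>" using qn_le[of "a - f" c] by linarith
      then have "quot_norm (a - f) < e" using ep by (simp add: \<epsilon>_def)
      then show "\<exists>f\<in>F. quot_norm (a - f) < e" using fF by blast
    qed
  qed
qed

theorem theorem2p1:
  fixes A :: "('h::{real_inner,complete_space} \<Rightarrow>\<^sub>L 'h) set"
    and L :: "('h \<Rightarrow>\<^sub>L 'h) \<Rightarrow> real"
  assumes "order_unit_space A"
    and "seminorm_on A L"
    and "L id_blinfun = 0"
  shows "((\<exists>M::real. \<forall>\<mu>\<in>state_space A. \<forall>\<nu>\<in>state_space A. rho_L A L \<mu> \<nu> \<le> ereal M)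
            \<longleftrightarrow> (\<exists>M::real. \<forall>a\<in>lip_ball A L. quot_norm a \<le> M))
       \<and> (rho_topology A L = weak_star_topology A
            \<longleftrightarrow> quot_totally_bounded (lip_ball A L))"
  using part_a[OF assms(1,2)] part_b_if[OF assms(1,2)] part_b_only_if[OF assms(1,2)] by blast

end
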